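(* Assume the Elliott–Halberstam Conjecture, fix $\delta>0$ and a constant $C\ge 3$. Then $g_n-g_n(n^{1+\delta}) = o(1/n)$ for all but $\ll x/\log^C x$ natural numbers $n\le x$; that is, for every $\epsilon>0$, the number of natural numbers $n\le x$ with $|g_n-g_n(n^{1+\delta})|>\epsilon/n$ is $\ll x/\log^C x$.
   Context: Elliott–Halberstam Conjecture: for any $\delta'>0$ and any $A>0$, $$\sum_{k<x^{1-\delta'}} \max_{(l,k)=1}\max_{y\le x}\left|\pi(y,k,l)-\frac{\operatorname{li} y}{\phi(k)}\right| \ll_{\delta',A} \frac{x}{\log^A x},$$ where $\pi(y,k,l)$ is the number of primes $p\le y$ with $p\equiv l \pmod k$ and $\operatorname{li} y=\int_2^y dt/\log t$. For a natural number $n$ and real $x$, $g_n(x) = \sum_{q\le x,\ q\text{ prime},\ q\equiv 1 (n)} 1/q - \sum_{q\le x,\ q\text{ prime},\ q\equiv -1 (n)} 1/q$, and $g_n=\lim_{x\to\infty}g_n(x)$. *)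

theory Defs
  imports "HOL-Analysis.Analysis" "HOL-Number_Theory.Number_Theory"
begin

definition li :: "real \<Rightarrow> real" where
  "li y = integral {2..y} (\<lambda>t. 1 / ln t)"

definition prime_count_ap :: "real \<Rightarrow> nat \<Rightarrow> nat \<Rightarrow> nat" where
  "prime_count_ap y k l = card {p::nat. prime p \<and> real p \<le> y \<and> [p = l] (mod k)}"

text \<open>The max over residues l is over 0 \<le> l < k with
  gcd(l,k)=1 (pi(y,k,l) depends only on l mod k); the max over y \<le> x is over 2 \<le> y \<le> x
  (the range where li is meaningful).\<close>
definition EH_error :: "real \<Rightarrow> nat \<Rightarrow> real" where
  "EH_error x k =
     (SUP l\<in>{l. l < k \<and> coprime l k}.
        (SUP y\<in>{2..x}. \<bar>real (prime_count_ap y k l) - li y / real (totient k)\<bar>))"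

definition Elliott_Halberstam :: bool where
  "Elliott_Halberstam \<longleftrightarrow>
     (\<forall>\<delta>'>0. \<forall>A>0. \<exists>K. \<forall>\<^sub>F x in at_top.
        (\<Sum>k\<in>{k::nat. 1 \<le> k \<and> real k < x powr (1 - \<delta>')}. EH_error x k)
          \<le> K * x / (ln x) powr A)"

definition g_partial :: "nat \<Rightarrow> real \<Rightarrow> real" where
  "g_partial n x =
     (\<Sum>q\<in>{q::nat. prime q \<and> real q \<le> x \<and> [int q = 1] (mod int n)}. 1 / real q)
   - (\<Sum>q\<in>{q::nat. prime q \<and> real q \<le> x \<and> [int q = -1] (mod int n)}. 1 / real q)"

definition g_lim :: "nat \<Rightarrow> real" where
  "g_lim n = Lim at_top (g_partial n)"

end

theory Submission
  imports Defs "HOL-Real_Asymp.Real_Asymp"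
begin



lemma li_bounds:
  assumes "y \<ge> 2"
  shows "0 \<le> li y \<and> li y \<le> 2 * y"
proof -
  have cont: "continuous_on {2..y} (\<lambda>t. 1 / ln t)"
    by (intro continuous_intros) auto
  hence int: "(\<lambda>t. 1 / ln t) integrable_on {2..y}"
    by (rule integrable_continuous_interval)
  have ln2: "ln (2::real) > 1/2" using ln_2_less_1 ln2_ge_two_thirds by linarith
  have pt: "\<And>t. t \<in> {2..y} \<Longrightarrow> 0 \<le> 1 / ln t \<and> 1 / ln t \<le> (2::real)"
  proof -
    fix t :: real assume t: "t \<in> {2..y}"
    have "ln t \<ge> ln 2" using t by auto
    hence "ln t > 1/2" using ln2 by linarith
    thus "0 \<le> 1 / ln t \<and> 1 / ln t \<le> 2" by (auto simp: field_simps)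
  qed
  have "0 \<le> li y" unfolding li_def
    using pt by (intro integral_nonneg[OF int]) auto
  moreover have "li y \<le> integral {2..y} (\<lambda>t. 2::real)" unfolding li_def
    using pt by (intro integral_le[OF int]) auto
  moreover have "integral {2..y} (\<lambda>t. 2::real) = 2 * (y - 2)" using assms by simp
  ultimately have h: "0 \<le> li y" "li y \<le> 2 * (y - 2)" by linarith+
  have "li y \<le> 2 * y" using h(2) assms by (simp add: algebra_simps)
  thus ?thesis using h(1) by simp
qed

lemma pcap_le: "y \<ge> 0 \<Longrightarrow> real (prime_count_ap y k l) \<le> y + 1"
proof -
  assume y: "y \<ge> 0"
  have "{p::nat. prime p \<and> real p \<le> y \<and> [p = l] (mod k)} \<subseteq> {..nat \<lfloor>y\<rfloor>}"
    using y by (auto simp: le_nat_floor)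
  hence "prime_count_ap y k l \<le> card {..nat \<lfloor>y\<rfloor>}" unfolding prime_count_ap_def
    by (intro card_mono) auto
  hence "real (prime_count_ap y k l) \<le> real (nat \<lfloor>y\<rfloor>) + 1" by simp
  also have "\<dots> \<le> y + 1" using y by linarith
  finally show ?thesis .
qed

lemma err_bound:
  assumes "2 \<le> y" "y \<le> X"
  shows "\<bar>real (prime_count_ap y k l) - li y / real (totient k)\<bar> \<le> 3 * X + 1"
proof -
  have l: "0 \<le> li y" "li y \<le> 2 * y" using li_bounds assms by auto
  have "\<bar>li y / real (totient k)\<bar> \<le> li y"
  proof (cases "totient k = 0")
    case False
    hence "real (totient k) \<ge> 1" by linarith
    have "li y / real (totient k) \<le> li y" using l \<open>real (totient k) \<ge> 1\<close>
      by (simp add: divide_le_eq mult_le_cancel_left1)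
    moreover have "0 \<le> li y / real (totient k)" using l by simp
    ultimately show ?thesis by simp
  qed (use l in simp)
  moreover have "real (prime_count_ap y k l) \<le> y + 1" using assms by (intro pcap_le) auto
  ultimately show ?thesis using assms l by linarith
qed

lemma inner_bdd: "bdd_above ((\<lambda>y. \<bar>real (prime_count_ap y k l) - li y / real (totient k)\<bar>) ` {2..X})"
  using err_bound by (intro bdd_aboveI2[of _ _ "3*X+1"]) auto

lemma EH_error_ge:
  assumes "l < k" "coprime l k" "2 \<le> y" "y \<le> X"
  shows "\<bar>real (prime_count_ap y k l) - li y / real (totient k)\<bar> \<le> EH_error X k"
proof -
  have "\<bar>real (prime_count_ap y k l) - li y / real (totient k)\<bar>
      \<le> (SUP y\<in>{2..X}. \<bar>real (prime_count_ap y k l) - li y / real (totient k)\<bar>)"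
    using assms by (intro cSUP_upper inner_bdd) auto
  also have "\<dots> \<le> EH_error X k" unfolding EH_error_def
    using assms by (intro cSUP_upper bdd_above_finite finite_imageI) auto
  finally show ?thesis .
qed

lemma EH_error_nonneg:
  assumes "k \<ge> 1" "X \<ge> 2"
  shows "0 \<le> EH_error X k"
proof -
  have "\<exists>l. l < k \<and> coprime l k"
  proof (cases "k = 1")
    case True thus ?thesis by (intro exI[of _ 0]) auto
  next
    case False thus ?thesis using assms by (intro exI[of _ 1]) auto
  qed
  then obtain l where "l < k" "coprime l k" by blast
  hence "\<bar>real (prime_count_ap X k l) - li X / real (totient k)\<bar> \<le> EH_error X k"
    using assms by (intro EH_error_ge) auto
  thus ?thesis by linarith
qed

lemma EH_error_mono:
  assumes "k \<ge> 1" "2 \<le> X" "X \<le> X'"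
  shows "EH_error X k \<le> EH_error X' k"
  unfolding EH_error_def
proof (rule cSUP_mono)
  show "{l. l < k \<and> coprime l k} \<noteq> {}"
  proof (cases "k = 1")
    case True thus ?thesis by auto
  next
    case False hence "1 \<in> {l. l < k \<and> coprime l k}" using assms by auto
    thus ?thesis by blast
  qed
  show "bdd_above ((\<lambda>l. SUP y\<in>{2..X'}. \<bar>real (prime_count_ap y k l) - li y / real (totient k)\<bar>) ` {l. l < k \<and> coprime l k})"
    by (intro bdd_above_finite finite_imageI) auto
  fix l assume l: "l \<in> {l. l < k \<and> coprime l k}"
  show "\<exists>m\<in>{l. l < k \<and> coprime l k}. (SUP y\<in>{2..X}. \<bar>real (prime_count_ap y k l) - li y / real (totient k)\<bar>)
           \<le> (SUP y\<in>{2..X'}. \<bar>real (prime_count_ap y k m) - li y / real (totient k)\<bar>)"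
    using l assms by (intro bexI[of _ l] cSUP_subset_mono inner_bdd) auto
qed




lemma cong_m1: assumes "n \<ge> 1" shows "[p = n - 1] (mod n) \<longleftrightarrow> [int p = -1] (mod int n)"
proof -
  have "[p = n - 1] (mod n) \<longleftrightarrow> [int p = int (n - 1)] (mod int n)" by (simp add: cong_int_iff)
  also have "int (n - 1) = int n - 1" using assms by simp
  also have "[int p = int n - 1] (mod int n) \<longleftrightarrow> int n dvd ((int p + 1) + (-1) * int n)"
    by (simp add: cong_iff_dvd_diff algebra_simps)
  also have "\<dots> \<longleftrightarrow> int n dvd (int p + 1)" by (rule dvd_add_times_triv_right_iff)
  also have "\<dots> \<longleftrightarrow> [int p = -1] (mod int n)" by (simp add: cong_iff_dvd_diff)
  finally show ?thesis .
qed

lemma le_floor_nat: "(x::real) \<ge> 0 \<Longrightarrow> real q \<le> x \<longleftrightarrow> q \<le> nat \<lfloor>x\<rfloor>"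
  using le_nat_floor of_nat_floor of_nat_le_iff by linarith

definition Tset :: "(nat \<Rightarrow> bool) \<Rightarrow> nat \<Rightarrow> nat set" where
  "Tset P N = {q. q \<le> N \<and> P q}"

definition P1 :: "nat \<Rightarrow> nat \<Rightarrow> bool" where "P1 n q = (prime q \<and> [int q = 1] (mod int n))"
definition P2 :: "nat \<Rightarrow> nat \<Rightarrow> bool" where "P2 n q = (prime q \<and> [int q = -1] (mod int n))"

definition Gs :: "nat \<Rightarrow> nat \<Rightarrow> real" where
  "Gs n N = (\<Sum>q\<in>Tset (P1 n) N. 1 / real q) - (\<Sum>q\<in>Tset (P2 n) N. 1 / real q)"
definition Dc :: "nat \<Rightarrow> nat \<Rightarrow> real" where
  "Dc n N = real (card (Tset (P1 n) N)) - real (card (Tset (P2 n) N))"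

lemma Tset_finite[simp]: "finite (Tset P N)"
  unfolding Tset_def by (rule finite_subset[of _ "{..N}"]) auto

lemma Tset_Suc: "Tset P (Suc N) = (if P (Suc N) then insert (Suc N) (Tset P N) else Tset P N)"
  unfolding Tset_def by (auto simp: le_Suc_eq)

lemma Tset_sum_Suc: "sum f (Tset P (Suc N)) = sum f (Tset P N) + (if P (Suc N) then f (Suc N) else 0)"
proof (cases "P (Suc N)")
  case True
  have "Suc N \<notin> Tset P N" by (simp add: Tset_def)
  thus ?thesis using True by (simp add: Tset_Suc add.commute)
qed (simp add: Tset_Suc)

lemma Tset_card_Suc: "real (card (Tset P (Suc N))) = real (card (Tset P N)) + (if P (Suc N) then 1 else 0)"
proof (cases "P (Suc N)")
  case True
  have "Suc N \<notin> Tset P N" by (simp add: Tset_def)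
  thus ?thesis using True by (simp add: Tset_Suc)
qed (simp add: Tset_Suc)

lemma g_partial_Gs: "x \<ge> 0 \<Longrightarrow> g_partial n x = Gs n (nat \<lfloor>x\<rfloor>)"
  unfolding g_partial_def Gs_def Tset_def P1_def P2_def
  by (simp add: le_floor_nat conj_commute conj_left_commute)

lemma pc1: "prime_count_ap (real N) n 1 = card (Tset (P1 n) N)"
  unfolding prime_count_ap_def Tset_def P1_def
  by (metis (no_types, lifting) cong_int_iff of_nat_1 of_nat_le_iff)

lemma pc2: "n \<ge> 1 \<Longrightarrow> prime_count_ap (real N) n (n - 1) = card (Tset (P2 n) N)"
proof -
  assume n: "n \<ge> 1"
  have h: "\<And>p. [p = n - 1] (mod n) \<longleftrightarrow> [int p = -1] (mod int n)" using cong_m1 n by blast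
  show ?thesis unfolding prime_count_ap_def Tset_def P2_def
    by (intro arg_cong[where f=card] Collect_cong) (simp only: h of_nat_le_iff, blast)
qed

lemma Dc_bound:
  assumes "n \<ge> 3" "2 \<le> N" "real N \<le> X"
  shows "\<bar>Dc n N\<bar> \<le> 2 * EH_error X n"
proof -
  let ?L = "li (real N) / real (totient n)"
  have "\<bar>real (prime_count_ap (real N) n 1) - ?L\<bar> \<le> EH_error X n"
    using assms by (intro EH_error_ge) auto
  moreover have "\<bar>real (prime_count_ap (real N) n (n - 1)) - ?L\<bar> \<le> EH_error X n"
    using assms coprime_diff_one_left_nat[of n] by (intro EH_error_ge) auto
  ultimately show ?thesis unfolding Dc_def using pc1[of N n] pc2[of n N] assms by simp
qed

lemma Gs_step: "Gs n (Suc N) - Gs n N = (Dc n (Suc N) - Dc n N) / real (Suc N)"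
  unfolding Gs_def Dc_def Tset_sum_Suc Tset_card_Suc
  by (simp add: field_simps)

lemma abel_aux:
  assumes "1 \<le> A" "A \<le> B" "\<forall>m. A \<le> m \<and> m \<le> B \<longrightarrow> \<bar>Dc n m\<bar> \<le> M"
  shows "\<bar>Gs n B - Gs n A - Dc n B / (real B + 1) + Dc n A / (real A + 1)\<bar>
           \<le> M * (1 / (real A + 1) - 1 / (real B + 1))"
  using assms(2,3)
proof (induction B rule: dec_induct)
  case base thus ?case by simp
next
  case (step B)
  have IH: "\<bar>Gs n B - Gs n A - Dc n B / (real B + 1) + Dc n A / (real A + 1)\<bar>
           \<le> M * (1 / (real A + 1) - 1 / (real B + 1))" using step by auto
  have dM: "\<bar>Dc n (Suc B)\<bar> \<le> M" using step by auto
  have pos: "real B + 1 > 0" by simp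
  have eq: "Gs n (Suc B) - Gs n A - Dc n (Suc B) / (real (Suc B) + 1) + Dc n A / (real A + 1)
     = (Gs n B - Gs n A - Dc n B / (real B + 1) + Dc n A / (real A + 1))
       + Dc n (Suc B) * (1 / (real B + 1) - 1 / (real B + 2))"
  proof -
    have h: "Gs n (Suc B) - Gs n B = Dc n (Suc B) / (real B + 1) - Dc n B / (real B + 1)"
      using Gs_step[of n B] by (simp add: diff_divide_distrib add.commute)
    have h2: "Dc n (Suc B) * (1 / (real B + 1) - 1 / (real B + 2))
       = Dc n (Suc B) / (real B + 1) - Dc n (Suc B) / (real B + 2)" by (simp add: right_diff_distrib)
    have e: "real (Suc B) + 1 = real B + 2" by simp
    have h3: "Dc n (Suc B) / (real (Suc B) + 1) = Dc n (Suc B) / (real B + 2)" by (simp only: e)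
    show ?thesis using h h2 h3 by linarith
  qed
  have "\<bar>Dc n (Suc B) * (1 / (real B + 1) - 1 / (real B + 2))\<bar>
        = \<bar>Dc n (Suc B)\<bar> * (1 / (real B + 1) - 1 / (real B + 2))"
    by (simp add: abs_mult frac_le)
  also have "\<dots> \<le> M * (1 / (real B + 1) - 1 / (real B + 2))"
    using dM by (intro mult_right_mono) (auto simp: frac_le)
  finally have d: "\<bar>Dc n (Suc B) * (1 / (real B + 1) - 1 / (real B + 2))\<bar>
        \<le> M * (1 / (real B + 1) - 1 / (real B + 2))" .
  have "M * (1 / (real A + 1) - 1 / (real B + 1)) + M * (1 / (real B + 1) - 1 / (real B + 2))
      = M * (1 / (real A + 1) - 1 / (real (Suc B) + 1))" by (simp add: algebra_simps)
  thus ?case using IH d unfolding eq by linarith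
qed

lemma abel_bound:
  assumes "1 \<le> A" "A \<le> B" "\<forall>m. A \<le> m \<and> m \<le> B \<longrightarrow> \<bar>Dc n m\<bar> \<le> M"
  shows "\<bar>Gs n B - Gs n A\<bar> \<le> 2 * M / (real A + 1)"
proof -
  have dA: "\<bar>Dc n A\<bar> \<le> M" using assms by auto
  have dB: "\<bar>Dc n B\<bar> \<le> M" using assms by auto
  have a: "\<bar>Gs n B - Gs n A - Dc n B / (real B + 1) + Dc n A / (real A + 1)\<bar>
           \<le> M * (1 / (real A + 1) - 1 / (real B + 1))" by (rule abel_aux[OF assms])
  have "\<bar>Dc n B / (real B + 1)\<bar> = \<bar>Dc n B\<bar> / (real B + 1)" by (simp add: abs_divide)
  also have "\<dots> \<le> M / (real B + 1)" by (rule divide_right_mono) (use dB in auto)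
  finally have b: "\<bar>Dc n B / (real B + 1)\<bar> \<le> M / (real B + 1)" .
  have "\<bar>Dc n A / (real A + 1)\<bar> = \<bar>Dc n A\<bar> / (real A + 1)" by (simp add: abs_divide)
  also have "\<dots> \<le> M / (real A + 1)" by (rule divide_right_mono) (use dA in auto)
  finally have c: "\<bar>Dc n A / (real A + 1)\<bar> \<le> M / (real A + 1)" .
  have e1: "M * (1 / (real A + 1) - 1 / (real B + 1)) = M / (real A + 1) - M / (real B + 1)"
    by (simp add: right_diff_distrib)
  have e2: "2 * M / (real A + 1) = M / (real A + 1) + M / (real A + 1)" by simp
  show ?thesis using a b c e1 e2 by linarith
qed

lemma block_bound:
  assumes "n \<ge> 3" "2 \<le> A" "A \<le> B" "real B \<le> X"
  shows "\<bar>Gs n B - Gs n A\<bar> \<le> 4 * EH_error X n / (real A + 1)"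
proof -
  have "\<forall>m. A \<le> m \<and> m \<le> B \<longrightarrow> \<bar>Dc n m\<bar> \<le> 2 * EH_error X n"
  proof (intro allI impI)
    fix m assume m: "A \<le> m \<and> m \<le> B"
    have "real m \<le> real B" using m by simp
    hence "real m \<le> X" using assms(4) by linarith
    moreover have "2 \<le> m" using m assms(2) by linarith
    ultimately show "\<bar>Dc n m\<bar> \<le> 2 * EH_error X n" using assms(1) by (intro Dc_bound) auto
  qed
  hence "\<bar>Gs n B - Gs n A\<bar> \<le> 2 * (2 * EH_error X n) / (real A + 1)"
    using assms(2,3) by (intro abel_bound) auto
  thus ?thesis by simp
qed




definition fE :: "nat \<Rightarrow> nat \<Rightarrow> real" where
  "fE n j = EH_error (2 ^ j) n / 2 ^ j"

lemma fE_nonneg: "n \<ge> 1 \<Longrightarrow> j \<ge> 1 \<Longrightarrow> 0 \<le> fE n j"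
proof -
  assume "n \<ge> 1" "j \<ge> 1"
  moreover have "(2::real) \<le> 2 ^ j" using \<open>j \<ge> 1\<close>
    by (metis power_one_right power_increasing one_le_numeral)
  ultimately show ?thesis unfolding fE_def by (simp add: EH_error_nonneg)
qed

lemma single_block:
  assumes n: "n \<ge> 3" and j: "j \<ge> 1" and y: "2 ^ j \<le> y" and xy: "y \<le> x" and x: "x \<le> 2 ^ Suc j"
  shows "\<bar>g_partial n x - g_partial n y\<bar> \<le> 8 * fE n (Suc j)"
proof -
  define A where "A = nat \<lfloor>y\<rfloor>"
  define B where "B = nat \<lfloor>x\<rfloor>"
  have p2: "(2::real) \<le> 2 ^ j" using j by (metis power_one_right power_increasing one_le_numeral)
  have y0: "y \<ge> 0" "x \<ge> 0" using p2 y xy by linarith+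
  have "real (2 ^ j) \<le> y" using y by simp
  hence Aj: "2 ^ j \<le> A" unfolding A_def using le_floor_nat[OF y0(1)] by blast
  hence Aj': "(2::real) ^ j \<le> real A" by (metis of_nat_le_iff of_nat_numeral of_nat_power)
  have A2: "2 \<le> A" using Aj' p2 by linarith
  have AB: "A \<le> B" unfolding A_def B_def using xy by (simp add: floor_mono nat_mono)
  have "real B \<le> x" unfolding B_def using y0 by linarith
  hence BX: "real B \<le> 2 ^ Suc j" using x by linarith
  have E0: "0 \<le> EH_error (2 ^ Suc j) n" using n p2 by (intro EH_error_nonneg) auto
  have "\<bar>g_partial n x - g_partial n y\<bar> = \<bar>Gs n B - Gs n A\<bar>"
    unfolding A_def B_def using y0 by (simp add: g_partial_Gs)
  also have "\<dots> \<le> 4 * EH_error (2 ^ Suc j) n / (real A + 1)"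
    by (rule block_bound[OF n A2 AB BX])
  also have "\<dots> \<le> 4 * EH_error (2 ^ Suc j) n / 2 ^ j"
  proof (rule divide_left_mono)
    show "(2::real) ^ j \<le> real A + 1" using Aj' by linarith
    show "0 \<le> 4 * EH_error (2 ^ Suc j) n" using E0 by simp
    show "0 < (real A + 1) * 2 ^ j" by simp
  qed
  also have "\<dots> = 8 * fE n (Suc j)" unfolding fE_def by (simp add: field_simps)
  finally show ?thesis .
qed

lemma interval_bound:
  assumes n: "n \<ge> 3" and m: "m \<ge> 1"
  shows "2 ^ m \<le> y \<Longrightarrow> y \<le> x \<Longrightarrow> x \<le> 2 ^ (m + k) \<Longrightarrow>
     \<bar>g_partial n x - g_partial n y\<bar> \<le> 8 * (\<Sum>i<k. fE n (i + Suc m))"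
proof (induction k arbitrary: x y)
  case 0
  hence "x \<le> 2 ^ m" by simp
  with 0 have "x = y" by linarith
  thus ?case by simp
next
  case (Suc k)
  have f0: "0 \<le> fE n (k + Suc m)" using n by (intro fE_nonneg) auto
  have s0: "0 \<le> (\<Sum>i<k. fE n (i + Suc m))" using n by (intro sum_nonneg fE_nonneg) auto
  have sumeq: "(\<Sum>i<Suc k. fE n (i + Suc m)) = (\<Sum>i<k. fE n (i + Suc m)) + fE n (k + Suc m)" by simp
  have mk: "m + Suc k = Suc (m + k)" "k + Suc m = Suc (m + k)" by simp_all
  have jm: "m + k \<ge> 1" using m by simp
  have pmk: "(2::real) ^ m \<le> 2 ^ (m + k)" by (intro power_increasing) auto
  show ?case
  proof (cases "x \<le> 2 ^ (m + k)")
    case True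
    hence "\<bar>g_partial n x - g_partial n y\<bar> \<le> 8 * (\<Sum>i<k. fE n (i + Suc m))"
      using Suc by blast
    thus ?thesis using sumeq f0 by linarith
  next
    case False
    note xbig = this
    show ?thesis
    proof (cases "y \<ge> 2 ^ (m + k)")
      case True
      have "\<bar>g_partial n x - g_partial n y\<bar> \<le> 8 * fE n (Suc (m + k))"
        using Suc.prems True by (intro single_block[OF n jm]) (auto simp: mk)
      hence "\<bar>g_partial n x - g_partial n y\<bar> \<le> 8 * fE n (k + Suc m)" using mk by (simp add: add.commute)
      thus ?thesis using sumeq s0 by linarith
    next
      case False
      have h1': "\<bar>g_partial n x - g_partial n (2 ^ (m + k))\<bar> \<le> 8 * fE n (Suc (m + k))"
        using Suc.prems xbig by (intro single_block[OF n jm]) (auto simp: mk)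
      hence h1: "\<bar>g_partial n x - g_partial n (2 ^ (m + k))\<bar> \<le> 8 * fE n (k + Suc m)"
        using mk by (simp add: add.commute)
      have h2: "\<bar>g_partial n (2 ^ (m + k)) - g_partial n y\<bar> \<le> 8 * (\<Sum>i<k. fE n (i + Suc m))"
        using Suc.prems False by (intro Suc.IH) auto
      have "\<bar>g_partial n x - g_partial n y\<bar> \<le> \<bar>g_partial n x - g_partial n (2 ^ (m + k))\<bar>
            + \<bar>g_partial n (2 ^ (m + k)) - g_partial n y\<bar>" by linarith
      thus ?thesis using h1 h2 sumeq by linarith
    qed
  qed
qed

definition Ttail :: "nat \<Rightarrow> nat \<Rightarrow> real" where
  "Ttail n m = (\<Sum>i. fE n (i + Suc m))"

lemma tail_bound:
  assumes n: "n \<ge> 3" and m: "m \<ge> 1" and sf: "summable (fE n)"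
    and y: "2 ^ m \<le> y" and xy: "y \<le> x"
  shows "\<bar>g_partial n x - g_partial n y\<bar> \<le> 8 * Ttail n m"
proof -
  obtain M where M: "x < 2 ^ M" using real_arch_pow[of 2 x] by auto
  have "(2::real) ^ m \<le> 2 ^ (m + M)" by (intro power_increasing) auto
  have "(2::real) ^ M \<le> 2 ^ (m + M)" by (intro power_increasing) auto
  hence "x \<le> 2 ^ (m + M)" using M by linarith
  hence h1: "\<bar>g_partial n x - g_partial n y\<bar> \<le> 8 * (\<Sum>i<M. fE n (i + Suc m))"
    using interval_bound[OF n m y xy] by blast
  have ss: "summable (\<lambda>i. fE n (i + Suc m))"
    using summable_iff_shift[of "fE n" "Suc m"] sf by blast
  have "(\<Sum>i<M. fE n (i + Suc m)) \<le> Ttail n m" unfolding Ttail_def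
  proof (rule sum_le_suminf[OF ss])
    fix i assume "i \<in> - {..<M}"
    show "0 \<le> fE n (i + Suc m)" using n by (intro fE_nonneg) auto
  qed auto
  thus ?thesis using h1 by linarith
qed

lemma Ttail_lim:
  assumes sf: "summable (fE n)"
  shows "Ttail n \<longlonglongrightarrow> 0"
proof -
  have eq: "Ttail n m = suminf (fE n) - (\<Sum>i<Suc m. fE n i)" for m
    unfolding Ttail_def using suminf_split_initial_segment[OF sf, of "Suc m"] by simp
  have "(\<lambda>m. \<Sum>i<Suc m. fE n i) \<longlonglongrightarrow> suminf (fE n)"
    by (rule LIMSEQ_Suc[OF summable_LIMSEQ[OF sf]])
  hence "(\<lambda>m. suminf (fE n) - (\<Sum>i<Suc m. fE n i)) \<longlonglongrightarrow> suminf (fE n) - suminf (fE n)"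
    by (intro tendsto_intros)
  thus ?thesis unfolding eq[abs_def] by simp
qed

lemma g_lim_bound:
  assumes n: "n \<ge> 3" and m: "m \<ge> 1" and sf: "summable (fE n)" and y: "2 ^ m \<le> y"
  shows "\<bar>g_lim n - g_partial n y\<bar> \<le> 8 * Ttail n m"
proof -
  have T0: "Ttail n \<longlonglongrightarrow> 0" by (rule Ttail_lim[OF sf])
  have small: "\<exists>m'\<ge>1. 8 * Ttail n m' < e" if e: "e > 0" for e
  proof -
    have "eventually (\<lambda>m'. Ttail n m' < e / 8) sequentially"
      using order_tendstoD(2)[OF T0, of "e/8"] e by simp
    moreover have "eventually (\<lambda>m'. m' \<ge> (1::nat)) sequentially" by (rule eventually_ge_at_top)
    ultimately have "eventually (\<lambda>m'. m' \<ge> 1 \<and> Ttail n m' < e / 8) sequentially"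
      by eventually_elim auto
    then obtain m' where "m' \<ge> 1" "Ttail n m' < e / 8" using eventually_sequentially by auto
    thus ?thesis by (intro exI[of _ m']) auto
  qed
  define u where "u k = g_partial n (real k)" for k
  have cb: "\<bar>g_partial n x - g_partial n y\<bar> \<le> 8 * Ttail n m'"
    if "m' \<ge> 1" "2 ^ m' \<le> x" "2 ^ m' \<le> y" for x y m'
  proof (cases "y \<le> x")
    case True thus ?thesis using tail_bound[OF n that(1) sf that(3) True] by blast
  next
    case False
    hence "\<bar>g_partial n y - g_partial n x\<bar> \<le> 8 * Ttail n m'"
      using tail_bound[OF n that(1) sf that(2)] by simp
    thus ?thesis by (simp add: abs_minus_commute)
  qed
  have "Cauchy u"
  proof (rule CauchyI)
    fix e :: real assume "e > 0"
    then obtain m' where m': "m' \<ge> 1" "8 * Ttail n m' < e" using small by blast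
    show "\<exists>M. \<forall>k\<ge>M. \<forall>k'\<ge>M. norm (u k - u k') < e"
    proof (intro exI[of _ "2 ^ m'"] allI impI)
      fix k k' :: nat assume "k \<ge> 2 ^ m'" "k' \<ge> 2 ^ m'"
      hence "(2::real) ^ m' \<le> real k" "(2::real) ^ m' \<le> real k'"
        by (metis of_nat_le_iff of_nat_numeral of_nat_power)+
      hence "\<bar>u k - u k'\<bar> \<le> 8 * Ttail n m'" unfolding u_def using cb m' by blast
      thus "norm (u k - u k') < e" using m' by simp
    qed
  qed
  then obtain L where uL: "u \<longlonglongrightarrow> L" using Cauchy_convergent_iff convergent_def by blast
  have xb: "\<bar>g_partial n x - L\<bar> \<le> 8 * Ttail n m'" if "m' \<ge> 1" "2 ^ m' \<le> x" for x m'
  proof -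
    have "(\<lambda>k. \<bar>u k - g_partial n x\<bar>) \<longlonglongrightarrow> \<bar>L - g_partial n x\<bar>"
      by (intro tendsto_intros uL)
    moreover have "\<forall>k\<ge>nat \<lceil>x\<rceil>. \<bar>u k - g_partial n x\<bar> \<le> 8 * Ttail n m'"
    proof (intro allI impI)
      fix k assume "k \<ge> nat \<lceil>x\<rceil>"
      hence "x \<le> real k" by linarith
      hence "2 ^ m' \<le> real k" using that by linarith
      thus "\<bar>u k - g_partial n x\<bar> \<le> 8 * Ttail n m'" unfolding u_def using cb that by blast
    qed
    ultimately have "\<bar>L - g_partial n x\<bar> \<le> 8 * Ttail n m'" by (rule Lim_bounded)
    thus ?thesis by (simp add: abs_minus_commute)
  qed
  have "(g_partial n \<longlongrightarrow> L) at_top"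
  proof (rule tendstoI)
    fix e :: real assume "e > 0"
    then obtain m' where m': "m' \<ge> 1" "8 * Ttail n m' < e" using small by blast
    have "eventually (\<lambda>x. x \<ge> (2::real) ^ m') at_top" by (rule eventually_ge_at_top)
    thus "eventually (\<lambda>x. dist (g_partial n x) L < e) at_top"
    proof eventually_elim
      case (elim x)
      thus ?case using xb[OF m'(1) elim] m' by (simp add: dist_real_def)
    qed
  qed
  hence "g_lim n = L" unfolding g_lim_def by (intro tendsto_Lim) auto
  thus ?thesis using xb[OF m y] by (simp add: abs_minus_commute)
qed




definition Iset :: "real \<Rightarrow> real \<Rightarrow> nat set" where
  "Iset e X = {k. 1 \<le> k \<and> real k < X powr e}"

lemma Iset_finite: "finite (Iset e X)"
proof -
  have "Iset e X \<subseteq> {..nat \<lceil>X powr e\<rceil>}" unfolding Iset_def by (auto, linarith)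
  thus ?thesis by (rule finite_subset) auto
qed

lemma sub_bound:
  assumes hyp: "\<forall>X\<ge>X1. (\<Sum>k\<in>Iset e X. EH_error X k) \<le> K * X / (ln X) powr A"
    and X: "X \<ge> X1" "X \<ge> 2" and S: "S \<subseteq> Iset e X"
  shows "(\<Sum>k\<in>S. EH_error X k) \<le> K * X / (ln X) powr A"
proof -
  have "(\<Sum>k\<in>S. EH_error X k) \<le> (\<Sum>k\<in>Iset e X. EH_error X k)"
  proof (rule sum_mono2[OF Iset_finite S])
    fix k assume "k \<in> Iset e X - S"
    thus "0 \<le> EH_error X k" using X by (intro EH_error_nonneg) (auto simp: Iset_def)
  qed
  thus ?thesis using hyp X by auto
qed

lemma j_bound:
  assumes hyp: "\<forall>X\<ge>X1. (\<Sum>k\<in>Iset e X. EH_error X k) \<le> K * X / (ln X) powr A"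
    and j: "j \<ge> 1" "(2::real) ^ j \<ge> X1" and S: "S \<subseteq> Iset e (2 ^ j)"
  shows "(\<Sum>k\<in>S. EH_error (2 ^ j) k) / 2 ^ j \<le> (K / ln 2 powr A) / real j powr A"
proof -
  have p2: "(2::real) \<le> 2 ^ j" using j by (metis power_one_right power_increasing one_le_numeral)
  have "(\<Sum>k\<in>S. EH_error (2 ^ j) k) \<le> K * 2 ^ j / (ln (2 ^ j)) powr A"
    by (rule sub_bound[OF hyp j(2) p2 S])
  also have "ln ((2::real) ^ j) powr A = real j powr A * ln 2 powr A"
    by (simp add: ln_realpow powr_mult)
  finally have "(\<Sum>k\<in>S. EH_error (2 ^ j) k) \<le> K * 2 ^ j / (real j powr A * ln 2 powr A)" .
  hence "(\<Sum>k\<in>S. EH_error (2 ^ j) k) / 2 ^ j \<le> K * 2 ^ j / (real j powr A * ln 2 powr A) / 2 ^ j"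
    by (intro divide_right_mono) auto
  also have "\<dots> = (K / ln 2 powr A) / real j powr A" by (simp add: field_simps)
  finally show ?thesis .
qed

lemma jpowr_ge:
  assumes "j \<ge> 1" "A \<ge> 2"
  shows "real j ^ 2 \<le> real j powr A"
proof -
  have "real j powr 2 \<le> real j powr A" using assms by (intro powr_mono) auto
  moreover have "real j powr 2 = real j ^ 2" using assms by (subst powr_realpow[symmetric]) auto
  ultimately show ?thesis by simp
qed

lemma fE_summable:
  assumes hyp: "\<forall>X\<ge>X1. (\<Sum>k\<in>Iset e X. EH_error X k) \<le> K * X / (ln X) powr A"
    and K: "K \<ge> 0" and A: "A \<ge> 2" and e: "e > 0" and n: "n \<ge> 1"
  shows "summable (fE n)"
proof -
  define W where "W = K / ln 2 powr A"
  have W0: "W \<ge> 0" unfolding W_def using K by simp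
  obtain j0 where j0: "max X1 (real n powr (1 / e)) < 2 ^ j0"
    using real_arch_pow[of 2 "max X1 (real n powr (1 / e))"] by auto
  have ev: "eventually (\<lambda>j. norm (fE n j) \<le> W * inverse (real j ^ 2)) sequentially"
  proof (rule eventually_sequentiallyI[of "max j0 1"])
    fix j assume jj: "j \<ge> max j0 1"
    have pj: "(2::real) ^ j0 \<le> 2 ^ j" using jj by (intro power_increasing) auto
    have X1j: "X1 \<le> 2 ^ j" using j0 pj by linarith
    have "real n powr (1 / e) < 2 ^ j" using j0 pj by linarith
    hence "(real n powr (1 / e)) powr e < (2 ^ j) powr e" using e by (intro powr_less_mono2) auto
    hence nlt: "real n < (2 ^ j) powr e" using e n by (simp add: powr_powr)
    have S: "{n} \<subseteq> Iset e (2 ^ j)" unfolding Iset_def using nlt n by auto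
    have "fE n j \<le> W / real j powr A" unfolding fE_def W_def
      using j_bound[OF hyp _ X1j S] jj by simp
    also have "\<dots> \<le> W / real j ^ 2"
      using W0 jj jpowr_ge[OF _ A, of j] by (intro divide_left_mono) auto
    finally have "fE n j \<le> W * inverse (real j ^ 2)" by (simp add: divide_inverse)
    moreover have "0 \<le> fE n j" using n jj by (intro fE_nonneg) auto
    ultimately show "norm (fE n j) \<le> W * inverse (real j ^ 2)" by simp
  qed
  moreover have "summable (\<lambda>j. W * inverse (real j ^ 2))"
    by (intro summable_mult inverse_power_summable) auto
  ultimately show ?thesis by (rule summable_comparison_test_ev)
qed




lemma log_floor_props:
  assumes "a \<ge> 2"
  shows "nat \<lfloor>log 2 a\<rfloor> \<ge> 1 \<and> 2 ^ nat \<lfloor>log 2 a\<rfloor> \<le> a \<and> a < 2 ^ Suc (nat \<lfloor>log 2 a\<rfloor>)"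
proof -
  define m where "m = nat \<lfloor>log 2 a\<rfloor>"
  have l1: "log 2 a \<ge> 1" using assms by simp
  have fl: "real m \<le> log 2 a" "log 2 a < real m + 1" unfolding m_def using l1 by linarith+
  have m1: "m \<ge> 1" unfolding m_def using l1 by linarith
  have "(2::real) ^ m = 2 powr (real m)" by (simp add: powr_realpow)
  also have "\<dots> \<le> 2 powr (log 2 a)" using fl by (intro powr_mono) auto
  also have "\<dots> = a" using assms by simp
  finally have lo: "2 ^ m \<le> a" .
  have "a = 2 powr (log 2 a)" using assms by simp
  also have "\<dots> < 2 powr (real m + 1)" using fl by (intro powr_less_mono) auto
  also have "\<dots> = 2 powr real (Suc m)" by (simp add: add.commute)
  also have "\<dots> = 2 ^ Suc m" by (rule powr_realpow) simp
  finally have hi: "a < 2 ^ Suc m" .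
  show ?thesis using m1 lo hi unfolding m_def by blast
qed

theorem proposition2:
  fixes \<delta> C :: real
  assumes EH: Elliott_Halberstam
    and "\<delta> > 0" and "C \<ge> 3"
  shows "\<forall>\<epsilon>>0. \<exists>K. \<forall>\<^sub>F x in at_top.
           real (card {n::nat. 1 \<le> n \<and> real n \<le> x \<and>
              \<bar>g_lim n - g_partial n (real n powr (1 + \<delta>))\<bar> > \<epsilon> / real n})
           \<le> K * x / (ln x) powr C"
proof (intro allI impI)
  fix \<epsilon> :: real assume eps: "\<epsilon> > 0"
  have dpos: "\<delta> > 0" and C3: "C \<ge> 3" using assms by auto
  define e where "e = 1 / (1 + \<delta>)"
  have epos: "e > 0" unfolding e_def using dpos by simp
  have d'pos: "\<delta> / (1 + \<delta>) > 0" using dpos by simp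
  have e_eq: "1 - \<delta> / (1 + \<delta>) = e" unfolding e_def using dpos by (simp add: field_simps)
  define A where "A = C + 2"
  have A2: "A \<ge> 2" and Apos: "A > 0" unfolding A_def using C3 by auto
  obtain K0 where "\<forall>\<^sub>F x in at_top.
        (\<Sum>k\<in>{k::nat. 1 \<le> k \<and> real k < x powr (1 - \<delta> / (1 + \<delta>))}. EH_error x k)
          \<le> K0 * x / (ln x) powr A"
    using EH d'pos Apos unfolding Elliott_Halberstam_def by blast
  then obtain X0 where X0: "\<And>x. x \<ge> X0 \<Longrightarrow>
        (\<Sum>k\<in>{k::nat. 1 \<le> k \<and> real k < x powr (1 - \<delta> / (1 + \<delta>))}. EH_error x k)
          \<le> K0 * x / (ln x) powr A"
    unfolding eventually_at_top_linorder by blast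
  define K where "K = max K0 0"
  define X1 where "X1 = max X0 2"
  have K0': "K \<ge> 0" unfolding K_def by simp
  have hyp: "\<forall>X\<ge>X1. (\<Sum>k\<in>Iset e X. EH_error X k) \<le> K * X / (ln X) powr A"
  proof (intro allI impI)
    fix X assume X: "X \<ge> X1"
    hence "X \<ge> X0" "X \<ge> 2" unfolding X1_def by auto
    hence "(\<Sum>k\<in>Iset e X. EH_error X k) \<le> K0 * X / (ln X) powr A"
      using X0[of X] unfolding Iset_def e_eq by simp
    also have "\<dots> \<le> K * X / (ln X) powr A"
      using \<open>X \<ge> 2\<close> unfolding K_def by (intro divide_right_mono mult_right_mono) auto
    finally show "(\<Sum>k\<in>Iset e X. EH_error X k) \<le> K * X / (ln X) powr A" .
  qed
  define W where "W = K / ln 2 powr A"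
  have W0: "W \<ge> 0" unfolding W_def using K0' by simp
  have summ: "\<And>n. n \<ge> 1 \<Longrightarrow> summable (fE n)"
    by (rule fE_summable[OF hyp K0' A2 epos])
  define a where "a n = real n powr (1 + \<delta>)" for n :: nat
  define mm where "mm n = nat \<lfloor>log 2 (a n)\<rfloor>" for n
  define n0 where "n0 = max 3 (nat \<lceil>X1\<rceil>)"
  have X12: "X1 \<ge> 2" unfolding X1_def by simp
  have an: "a n \<ge> X1 \<and> a n \<ge> real n" if "n \<ge> n0" for n
  proof -
    have n1a: "real n \<ge> 1" using that unfolding n0_def by simp
    have "X1 \<le> real (nat \<lceil>X1\<rceil>)" by (rule real_nat_ceiling_ge)
    moreover have "real (nat \<lceil>X1\<rceil>) \<le> real n" using that unfolding n0_def by simp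
    ultimately have n1: "real n \<ge> 1" "real n \<ge> X1" using n1a by linarith+
    have "real n powr 1 \<le> real n powr (1 + \<delta>)" using n1 dpos by (intro powr_mono) auto
    thus ?thesis using n1 unfolding a_def by simp
  qed
  have mprops: "mm n \<ge> 1 \<and> 2 ^ mm n \<le> a n \<and> a n < 2 ^ Suc (mm n)" if "n \<ge> n0" for n
    unfolding mm_def using log_floor_props[of "a n"] an[OF that] X12 by linarith
  have n3: "n \<ge> 3" if "n \<ge> n0" for n using that unfolding n0_def by simp
  define h where "h n j = (if mm n < j then fE n j else 0)" for n j
  have hnn: "0 \<le> h n j" if "n \<ge> 1" for n j
    unfolding h_def using that by (auto intro!: fE_nonneg)
  have hs: "summable (h n)" if "n \<ge> 1" for n
  proof (rule summable_comparison_test_ev[OF _ summ[OF that]])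
    show "eventually (\<lambda>j. norm (h n j) \<le> fE n j) sequentially"
      using eventually_ge_at_top[of "1::nat"]
      by eventually_elim (use that in \<open>auto simp: h_def intro!: fE_nonneg\<close>)
  qed
  have Rn: "Ttail n (mm n) = suminf (h n)" if "n \<ge> 1" for n
  proof -
    have "suminf (h n) = (\<Sum>i. h n (i + Suc (mm n))) + (\<Sum>i<Suc (mm n). h n i)"
      by (rule suminf_split_initial_segment[OF hs[OF that]])
    also have "(\<Sum>i<Suc (mm n). h n i) = 0" unfolding h_def by simp
    also have "(\<lambda>i. h n (i + Suc (mm n))) = (\<lambda>i. fE n (i + Suc (mm n)))"
      unfolding h_def by auto
    finally show ?thesis unfolding Ttail_def by simp
  qed
  have badb: "\<bar>g_lim n - g_partial n (a n)\<bar> \<le> 8 * suminf (h n)" if "n \<ge> n0" for n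
  proof -
    have "n \<ge> 1" using n3[OF that] by simp
    thus ?thesis
      using g_lim_bound[OF n3[OF that] _ summ, of "mm n" "a n"] mprops[OF that] Rn by auto
  qed
  have hj: "a n < 2 ^ j \<and> X1 \<le> 2 ^ j \<and> real n < (2 ^ j) powr e \<and> j \<ge> 1"
    if "n \<ge> n0" "mm n < j" for n j
  proof -
    have "(2::real) ^ Suc (mm n) \<le> 2 ^ j" using that by (intro power_increasing) auto
    hence lt: "a n < 2 ^ j" using mprops[OF that(1)] by linarith
    have "a n powr e < (2 ^ j) powr e"
      using lt an[OF that(1)] X12 epos by (intro powr_less_mono2) auto
    moreover have "a n powr e = real n" unfolding a_def e_def using dpos
      by (simp add: powr_powr)
    ultimately have "real n < (2 ^ j) powr e" by simp
    thus ?thesis using lt an[OF that(1)] that(2) by auto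
  qed
  define Z where "Z = (\<Sum>j. inverse (real j ^ 2))"
  have Zs: "summable (\<lambda>j. inverse (real j ^ 2))" by (intro inverse_power_summable) auto
  have Z0: "Z \<ge> 0" unfolding Z_def using Zs by (intro suminf_nonneg) auto
  define KK where "KK = 8 / \<epsilon> * W * Z * (2 * ln 2) powr C + 1"
  show "\<exists>K. \<forall>\<^sub>F x in at_top.
           real (card {n::nat. 1 \<le> n \<and> real n \<le> x \<and>
              \<bar>g_lim n - g_partial n (real n powr (1 + \<delta>))\<bar> > \<epsilon> / real n})
           \<le> K * x / (ln x) powr C"
  proof (intro exI[of _ KK])
    have ev1: "\<forall>\<^sub>F x in at_top. real n0 + sqrt x \<le> x / ln x powr C"
      using C3 by real_asymp
    have ev2: "\<forall>\<^sub>F x in at_top. (4::real) \<le> x" by (rule eventually_ge_at_top)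
    show "\<forall>\<^sub>F x in at_top.
           real (card {n::nat. 1 \<le> n \<and> real n \<le> x \<and>
              \<bar>g_lim n - g_partial n (real n powr (1 + \<delta>))\<bar> > \<epsilon> / real n})
           \<le> KK * x / (ln x) powr C"
      using ev1 ev2
    proof eventually_elim
      case (elim x)
      note x4 = elim(2)
      define Bad where "Bad = {n::nat. 1 \<le> n \<and> real n \<le> x \<and>
              \<bar>g_lim n - g_partial n (real n powr (1 + \<delta>))\<bar> > \<epsilon> / real n}"
      define S where "S = {n::nat. n0 \<le> n \<and> sqrt x < real n \<and> real n \<le> x}"
      have Sp: "n \<ge> n0" if "n \<in> S" for n using that by (auto simp: S_def)
      have S1: "n \<ge> 1" if "n \<in> S" for n using n3[OF Sp[OF that]] by simp
      have hsS: "summable (h n)" if "n \<in> S" for n using hs[OF S1[OF that]] .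
      define T where "T = ln x / (2 * ln 2)"
      have Tpos: "T > 0" unfolding T_def using x4 by simp
      have lnx: "ln x > 0" using x4 by simp
      have finS: "finite S"
        by (rule finite_subset[of _ "{..nat \<lfloor>x\<rfloor>}"]) (use x4 in \<open>auto simp: S_def le_floor_nat\<close>)
      have finB: "finite Bad"
        by (rule finite_subset[of _ "{..nat \<lfloor>x\<rfloor>}"]) (use x4 in \<open>auto simp: Bad_def le_floor_nat\<close>)
      have sub: "Bad \<subseteq> {..<n0} \<union> {1..nat \<lfloor>sqrt x\<rfloor>} \<union> (Bad \<inter> S)"
      proof
        fix n assume n: "n \<in> Bad"
        show "n \<in> {..<n0} \<union> {1..nat \<lfloor>sqrt x\<rfloor>} \<union> (Bad \<inter> S)"
        proof (cases "n < n0 \<or> real n \<le> sqrt x")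
          case True thus ?thesis using n le_floor_nat[of "sqrt x" n] x4 by (auto simp: Bad_def)
        next
          case False thus ?thesis using n by (auto simp: Bad_def S_def)
        qed
      qed
      have "card Bad \<le> card ({..<n0} \<union> {1..nat \<lfloor>sqrt x\<rfloor>} \<union> (Bad \<inter> S))"
        by (rule card_mono[OF _ sub]) (use finB in auto)
      also have "\<dots> \<le> card ({..<n0} \<union> {1..nat \<lfloor>sqrt x\<rfloor>}) + card (Bad \<inter> S)"
        by (rule card_Un_le)
      also have "\<dots> \<le> n0 + nat \<lfloor>sqrt x\<rfloor> + card (Bad \<inter> S)"
        using card_Un_le[of "{..<n0}" "{1..nat \<lfloor>sqrt x\<rfloor>}"] by simp
      finally have "card Bad \<le> n0 + nat \<lfloor>sqrt x\<rfloor> + card (Bad \<inter> S)" .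
      hence c0: "real (card Bad) \<le> real n0 + real (nat \<lfloor>sqrt x\<rfloor>) + real (card (Bad \<inter> S))"
        by (metis of_nat_add of_nat_le_iff)
      have "real (nat \<lfloor>sqrt x\<rfloor>) \<le> sqrt x" by (rule of_nat_floor) (use x4 in simp)
      hence c1: "real (card Bad) \<le> real n0 + sqrt x + real (card (Bad \<inter> S))"
        using c0 by linarith
      
      have term_ge: "1 \<le> 8 / \<epsilon> * (real n * suminf (h n))" if "n \<in> Bad \<inter> S" for n
      proof -
        have nn0: "n \<ge> n0" using that by (auto simp: S_def)
        have npos: "real n > 0" using n3[OF nn0] by simp
        have "\<epsilon> / real n < \<bar>g_lim n - g_partial n (a n)\<bar>" using that by (auto simp: Bad_def a_def)
        also have "\<dots> \<le> 8 * suminf (h n)" by (rule badb[OF nn0])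
        finally have "\<epsilon> < 8 * suminf (h n) * real n" using npos by (simp add: divide_less_eq)
        thus ?thesis using eps by (simp add: field_simps)
      qed
      have hsum0: "0 \<le> suminf (h n)" if "n \<ge> 1" for n
        using hs[OF that] hnn[OF that] by (intro suminf_nonneg) auto
      have "real (card (Bad \<inter> S)) = (\<Sum>n\<in>Bad \<inter> S. 1)" by simp
      also have "\<dots> \<le> (\<Sum>n\<in>Bad \<inter> S. 8 / \<epsilon> * (real n * suminf (h n)))"
        by (rule sum_mono) (rule term_ge)
      also have "\<dots> \<le> (\<Sum>n\<in>S. 8 / \<epsilon> * (real n * suminf (h n)))"
      proof (rule sum_mono2[OF finS])
        show "Bad \<inter> S \<subseteq> S" by blast
        fix n assume "n \<in> S - Bad \<inter> S"
        hence "n \<ge> 1" using S1 by blast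
        thus "0 \<le> 8 / \<epsilon> * (real n * suminf (h n))" using eps hsum0 by simp
      qed
      also have "\<dots> = 8 / \<epsilon> * (\<Sum>n\<in>S. \<Sum>j. real n * h n j)"
      proof -
        have "\<And>n. n \<in> S \<Longrightarrow> real n * suminf (h n) = (\<Sum>j. real n * h n j)"
          using hsS by (intro suminf_mult[symmetric]) auto
        thus ?thesis by (simp add: sum_distrib_left)
      qed
      also have "(\<Sum>n\<in>S. \<Sum>j. real n * h n j) = (\<Sum>j. \<Sum>n\<in>S. real n * h n j)"
        using hsS by (intro suminf_sum[symmetric] summable_mult) auto
      finally have c2: "real (card (Bad \<inter> S)) \<le> 8 / \<epsilon> * (\<Sum>j. \<Sum>n\<in>S. real n * h n j)" .
      
      have tb: "(\<Sum>n\<in>S. real n * h n j) \<le> x * W * inverse (T powr C) * inverse (real j ^ 2)" for j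
      proof -
        define Sj where "Sj = {n\<in>S. mm n < j}"
        have finSj: "finite Sj" unfolding Sj_def using finS by simp
        have "(\<Sum>n\<in>S. real n * h n j) = (\<Sum>n\<in>Sj. real n * fE n j)"
          unfolding Sj_def h_def by (subst sum.inter_filter[OF finS]) (auto intro!: sum.cong)
        also have "\<dots> \<le> (\<Sum>n\<in>Sj. x * fE n j)"
        proof (rule sum_mono)
          fix n assume "n \<in> Sj"
          hence nS: "n \<in> S" and mj: "mm n < j" by (auto simp: Sj_def)
          hence "real n \<le> x" "n \<ge> 1" "j \<ge> 1" using S1[OF nS] hj[OF Sp[OF nS] mj] by (auto simp: S_def)
          moreover have "0 \<le> fE n j" using calculation by (intro fE_nonneg) auto
          ultimately show "real n * fE n j \<le> x * fE n j" by (intro mult_right_mono) auto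
        qed
        also have "\<dots> \<le> x * W * inverse (T powr C) * inverse (real j ^ 2)"
        proof (cases "Sj = {}")
          case True
          thus ?thesis using x4 W0 Tpos by simp
        next
          case False
          then obtain n1 where n1: "n1 \<in> Sj" by blast
          hence n1S: "n1 \<in> S" and mj1: "mm n1 < j" by (auto simp: Sj_def)
          have hj1: "a n1 < 2 ^ j \<and> X1 \<le> 2 ^ j \<and> real n1 < (2 ^ j) powr e \<and> j \<ge> 1"
            by (rule hj[OF Sp[OF n1S] mj1])
          have "sqrt x < real n1" using n1S by (auto simp: S_def)
          also have "real n1 \<le> a n1" using an[OF Sp[OF n1S]] by simp
          finally have sx: "sqrt x < 2 ^ j" using hj1 by linarith
          have "ln (sqrt x) < ln (2 ^ j)" using sx x4 by (subst ln_less_cancel_iff) auto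
          hence "ln x / 2 < real j * ln 2" using x4 by (simp add: ln_sqrt ln_realpow)
          hence jT: "T < real j" unfolding T_def by (simp add: field_simps)
          have j1: "j \<ge> 1" using hj1 by simp
          have SjI: "Sj \<subseteq> Iset e (2 ^ j)"
          proof
            fix n assume n: "n \<in> Sj"
            hence nS: "n \<in> S" and mj: "mm n < j" by (auto simp: Sj_def)
            hence "real n < (2 ^ j) powr e" "n \<ge> 1" using S1[OF nS] hj[OF Sp[OF nS] mj] by auto
            thus "n \<in> Iset e (2 ^ j)" by (auto simp: Iset_def)
          qed
          have "(\<Sum>n\<in>Sj. x * fE n j) = x * ((\<Sum>n\<in>Sj. EH_error (2 ^ j) n) / 2 ^ j)"
            unfolding fE_def by (simp add: sum_distrib_left sum_divide_distrib)
          also have "\<dots> \<le> x * (W / real j powr A)"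
            using j_bound[OF hyp j1 _ SjI] hj1 x4 unfolding W_def by (intro mult_left_mono) auto
          also have "real j powr A = real j powr C * real j ^ 2"
            unfolding A_def using j1 by (simp add: powr_add powr_realpow)
          also have "T powr C \<le> real j powr C" using jT Tpos C3 by (intro powr_mono2) auto
          hence "x * (W / (real j powr C * real j ^ 2)) \<le> x * (W / (T powr C * real j ^ 2))"
            using x4 W0 Tpos j1
            by (intro mult_left_mono divide_left_mono mult_right_mono mult_pos_pos) auto
          also have "\<dots> = x * W * inverse (T powr C) * inverse (real j ^ 2)"
            by (simp add: field_simps)
          finally show ?thesis .
        qed
        finally show ?thesis .
      qed
      have "(\<Sum>j. \<Sum>n\<in>S. real n * h n j) \<le> (\<Sum>j. x * W * inverse (T powr C) * inverse (real j ^ 2))"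
        using hsS tb Zs by (intro suminf_le summable_sum summable_mult) auto
      also have "\<dots> = x * W * inverse (T powr C) * Z"
        unfolding Z_def using Zs by (rule suminf_mult)
      finally have c3: "(\<Sum>j. \<Sum>n\<in>S. real n * h n j) \<le> x * W * inverse (T powr C) * Z" .
      have Tc: "T powr C = ln x powr C / (2 * ln 2) powr C"
        unfolding T_def by (simp add: powr_divide)
      have c4: "8 / \<epsilon> * (\<Sum>j. \<Sum>n\<in>S. real n * h n j) \<le> 8 / \<epsilon> * (x * W * inverse (T powr C) * Z)"
        by (rule mult_left_mono[OF c3]) (use eps in simp)
      have e5: "8 / \<epsilon> * (x * W * inverse (T powr C) * Z)
          = (8 / \<epsilon> * W * Z * (2 * ln 2) powr C) * x / ln x powr C"
        unfolding Tc using lnx by (simp add: field_simps)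
      have e6: "x / ln x powr C + (8 / \<epsilon> * W * Z * (2 * ln 2) powr C) * x / ln x powr C
          = KK * x / ln x powr C"
      proof -
        have lp: "ln x powr C > 0" using lnx by simp
        show ?thesis unfolding KK_def using lp eps by (simp add: field_simps)
      qed
      have "real (card Bad) \<le> KK * x / ln x powr C"
        using c1 c2 c4 e5 e6 elim(1) by linarith
      thus ?case unfolding Bad_def .
    qed
  qed
qed



end
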